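(* Let $G=(V,E,\omega)\in\mathcal G$, $\gamma\geq0$, and $\tau>0$. Define $J_\tau:\mathcal V\to\mathbb R$ by $J_\tau(u):=\langle\chi_V-u,e^{-\tau L}u\rangle_{\mathcal V}$. Then $J_\tau$ is strictly concave and Fréchet differentiable, with directional derivative at $u$ in direction $v$ given by $dJ^u_\tau(v)=\langle\chi_V-2e^{-\tau L}u,v\rangle_{\mathcal V}$. Furthermore, if $S^0\subset V$ and $\{S^k\}_{k=1}^N$ ($N\in\mathbb N\cup\{\infty\}$) is generated by the OKMBO scheme, then for all $k\in\{1,\dots,N\}$, $\chi_{S^k}\in\operatorname{argmin}_{v\in\mathcal K}dJ_\tau^{\chi_{S^{k-1}}}(v)$, and $J_\tau(\chi_{S^k})\leq J_\tau(\chi_{S^{k-1}})$, with equality if and only if $S^k=S^{k-1}$.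
   Context: $\mathcal{G}$ is the set of finite, simple, connected, undirected, edge-weighted graphs $G=(V,E,\omega)$ with $V=\{1,\dots,n\}$, $n\geq2$, weights $\omega_{ij}=\omega_{ji}>0$ on edges, $0$ otherwise. $d_i=\sum_j\omega_{ij}$. $\mathcal V$: functions $V\to\mathbb R$. Fixed $r\in[0,1]$: $\langle u,v\rangle_{\mathcal V}=\sum_id_i^ru_iv_i$, $(\Delta u)_i=d_i^{-r}\sum_j\omega_{ij}(u_i-u_j)$, $\mathcal M(u)=\sum_id_i^ru_i$, $\mathcal A(u)=\frac{\mathcal M(u)}{\sum_id_i^r}\chi_V$ ($\chi_S$ indicator of $S$). For $u\in\mathcal V$ let $\varphi$ be the unique solution of $\Delta\varphi=u-\mathcal A(u)$, $\mathcal M(\varphi)=0$, and $Lu:=\Delta u+\gamma\varphi$; $e^{-\tau L}$ is its operator exponential. $\mathcal K$: the set of $[0,1]$-valued functions in $\mathcal V$. OKMBO scheme: given $S^0\subset V$, $\gamma$, $\tau$, for $k=1,\dots,N$ compute $u=e^{-\tau L}\chi_{S^{k-1}}$ (the time-$\tau$ solution of $du/dt=-Lu$, $u(0)=\chi_{S^{k-1}}$) and set $S^k=\{i\in V:u_i\geq\frac12\}$. *)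

theory Defs
  imports "HOL-Analysis.Analysis"
begin

text \<open>Vertex set: a finite type 'v (standing for V = {1..n}); functions in the
  space of vertex functions are vectors in real ^ 'v.  Weights: w :: 'v => 'v => real.\<close>

definition wgraph :: "('v::finite \<Rightarrow> 'v \<Rightarrow> real) \<Rightarrow> bool" where
  "wgraph w \<longleftrightarrow> (\<forall>i j. w i j = w j i) \<and> (\<forall>i j. 0 \<le> w i j) \<and> (\<forall>i. w i i = 0)
     \<and> (\<forall>i j. (i, j) \<in> {(a, b). 0 < w a b}\<^sup>*)"

definition deg :: "('v::finite \<Rightarrow> 'v \<Rightarrow> real) \<Rightarrow> 'v \<Rightarrow> real" where
  "deg w i = (\<Sum>j\<in>UNIV. w i j)"

definition innerV :: "('v::finite \<Rightarrow> 'v \<Rightarrow> real) \<Rightarrow> real \<Rightarrow> real^'v \<Rightarrow> real^'v \<Rightarrow> real" where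
  "innerV w r u v = (\<Sum>i\<in>UNIV. deg w i powr r * u $ i * v $ i)"

definition Lap :: "('v::finite \<Rightarrow> 'v \<Rightarrow> real) \<Rightarrow> real \<Rightarrow> real^'v \<Rightarrow> real^'v" where
  "Lap w r u = (\<chi> i. deg w i powr (- r) * (\<Sum>j\<in>UNIV. w i j * (u $ i - u $ j)))"

definition massV :: "('v::finite \<Rightarrow> 'v \<Rightarrow> real) \<Rightarrow> real \<Rightarrow> real^'v \<Rightarrow> real" where
  "massV w r u = (\<Sum>i\<in>UNIV. deg w i powr r * u $ i)"

definition chi :: "'v::finite set \<Rightarrow> real^'v" where
  "chi S = (\<chi> i. if i \<in> S then 1 else 0)"

definition avgV :: "('v::finite \<Rightarrow> 'v \<Rightarrow> real) \<Rightarrow> real \<Rightarrow> real^'v \<Rightarrow> real^'v" where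
  "avgV w r u = (massV w r u / (\<Sum>i\<in>UNIV. deg w i powr r)) *\<^sub>R chi UNIV"

definition phiV :: "('v::finite \<Rightarrow> 'v \<Rightarrow> real) \<Rightarrow> real \<Rightarrow> real^'v \<Rightarrow> real^'v" where
  "phiV w r u = (THE p. Lap w r p = u - avgV w r u \<and> massV w r p = 0)"

definition Lop :: "('v::finite \<Rightarrow> 'v \<Rightarrow> real) \<Rightarrow> real \<Rightarrow> real \<Rightarrow> real^'v \<Rightarrow> real^'v" where
  "Lop w r \<gamma> u = Lap w r u + \<gamma> *\<^sub>R phiV w r u"

definition expL :: "('v::finite \<Rightarrow> 'v \<Rightarrow> real) \<Rightarrow> real \<Rightarrow> real \<Rightarrow> real \<Rightarrow> real^'v \<Rightarrow> real^'v" where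
  "expL w r \<gamma> \<tau> u = (\<Sum>k. ((- \<tau>) ^ k / fact k) *\<^sub>R ((Lop w r \<gamma> ^^ k) u))"

definition Jtau :: "('v::finite \<Rightarrow> 'v \<Rightarrow> real) \<Rightarrow> real \<Rightarrow> real \<Rightarrow> real \<Rightarrow> real^'v \<Rightarrow> real" where
  "Jtau w r \<gamma> \<tau> u = innerV w r (chi UNIV - u) (expL w r \<gamma> \<tau> u)"

definition dJtau :: "('v::finite \<Rightarrow> 'v \<Rightarrow> real) \<Rightarrow> real \<Rightarrow> real \<Rightarrow> real \<Rightarrow> real^'v \<Rightarrow> real^'v \<Rightarrow> real" where
  "dJtau w r \<gamma> \<tau> u v = innerV w r (chi UNIV - 2 *\<^sub>R expL w r \<gamma> \<tau> u) v"

definition Kset :: "(real^'v::finite) set" where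
  "Kset = {u. \<forall>i. 0 \<le> u $ i \<and> u $ i \<le> 1}"

definition okmbo_step :: "('v::finite \<Rightarrow> 'v \<Rightarrow> real) \<Rightarrow> real \<Rightarrow> real \<Rightarrow> real \<Rightarrow> 'v set \<Rightarrow> 'v set" where
  "okmbo_step w r \<gamma> \<tau> S = {i. expL w r \<gamma> \<tau> (chi S) $ i \<ge> 1/2}"

definition strictly_concave_on :: "'a::real_vector set \<Rightarrow> ('a \<Rightarrow> real) \<Rightarrow> bool" where
  "strictly_concave_on S f \<longleftrightarrow> convex S \<and>
     (\<forall>x\<in>S. \<forall>y\<in>S. x \<noteq> y \<longrightarrow> (\<forall>t. 0 < t \<and> t < 1 \<longrightarrow>
        f ((1 - t) *\<^sub>R x + t *\<^sub>R y) > (1 - t) * f x + t * f y))"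

end

theory Submission
  imports Defs
begin

locale G =
  fixes w :: "'v::finite \<Rightarrow> 'v \<Rightarrow> real" and r :: real
  assumes wg: "wgraph w" and card2: "CARD('v) \<ge> 2"
begin

lemma wsym: "w i j = w j i" using wg unfolding wgraph_def by blast
lemma wnn: "0 \<le> w i j" using wg unfolding wgraph_def by blast
lemma conn: "(i, j) \<in> {(a, b). 0 < w a b}\<^sup>*" using wg unfolding wgraph_def by blast

lemma deg_pos: "0 < deg w i"
proof -
  have "\<exists>j. j \<noteq> i"
  proof (rule ccontr)
    assume "\<not> (\<exists>j. j \<noteq> i)"
    then have "UNIV = {i}" by auto
    then have "CARD('v) = card {i}" by (simp only:)
    then have "CARD('v) = 1" by simp
    with card2 show False by simp
  qed
  then obtain j where "j \<noteq> i" by blast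
  then have "(i, j) \<in> {(a, b). 0 < w a b}\<^sup>+"
    using conn[of i j] by (metis rtranclD)
  then obtain k where "0 < w i k" by (auto dest: tranclD)
  moreover have "w i k \<le> deg w i" unfolding deg_def
    by (rule member_le_sum) (auto simp: wnn)
  ultimately show ?thesis by linarith
qed

definition c :: "'v \<Rightarrow> real" where "c i = deg w i powr r"

lemma c_pos: "0 < c i" unfolding c_def using deg_pos[of i] by simp

lemma innerV_c: "innerV w r u v = (\<Sum>i\<in>UNIV. c i * u $ i * v $ i)"
  unfolding innerV_def c_def ..

lemma innerV_sym: "innerV w r u v = innerV w r v u"
  unfolding innerV_def by (simp add: mult_ac)

lemma innerV_add_left: "innerV w r (u + u') v = innerV w r u v + innerV w r u' v"
  unfolding innerV_def by (simp add: algebra_simps sum.distrib)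
lemma innerV_add_right: "innerV w r v (u + u') = innerV w r v u + innerV w r v u'"
  unfolding innerV_def by (simp add: algebra_simps sum.distrib)
lemma innerV_diff_left: "innerV w r (u - u') v = innerV w r u v - innerV w r u' v"
  unfolding innerV_def by (simp add: algebra_simps sum_subtractf)
lemma innerV_diff_right: "innerV w r v (u - u') = innerV w r v u - innerV w r v u'"
  unfolding innerV_def by (simp add: algebra_simps sum_subtractf)
lemma innerV_scale_left: "innerV w r (a *\<^sub>R u) v = a * innerV w r u v"
  unfolding innerV_def by (simp add: algebra_simps sum_distrib_left)
lemma innerV_scale_right: "innerV w r v (a *\<^sub>R u) = a * innerV w r v u"
  unfolding innerV_def by (simp add: algebra_simps sum_distrib_left)
lemma innerV_zero_left[simp]: "innerV w r 0 v = 0" unfolding innerV_def by simp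
lemma innerV_zero_right[simp]: "innerV w r v 0 = 0" unfolding innerV_def by simp

lemma innerV_self_nonneg: "0 \<le> innerV w r u u"
  unfolding innerV_c by (intro sum_nonneg) (simp add: c_pos less_imp_le mult.assoc)

lemma innerV_self_pos: assumes "u \<noteq> 0" shows "0 < innerV w r u u"
proof -
  from assms obtain i where i: "u $ i \<noteq> 0" by (metis vec_eq_iff zero_index)
  have "0 < c i * u $ i * u $ i" using c_pos[of i] i by (metis mult.assoc mult_pos_pos not_real_square_gt_zero)
  also have "\<dots> \<le> innerV w r u u" unfolding innerV_c
    by (rule member_le_sum) (auto simp: c_pos less_imp_le mult.assoc)
  finally show ?thesis .
qed

lemma innerV_self_eq0: "innerV w r u u = 0 \<longleftrightarrow> u = 0"
  using innerV_self_pos[of u] by (cases "u = 0") auto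

lemma bl_innerV_left: "bounded_linear (\<lambda>x. innerV w r x v)"
  unfolding linear_conv_bounded_linear[symmetric]
  by (rule linearI) (simp_all add: innerV_add_left innerV_scale_left)
lemma bl_innerV_right: "bounded_linear (\<lambda>x. innerV w r v x)"
  unfolding linear_conv_bounded_linear[symmetric]
  by (rule linearI) (simp_all add: innerV_add_right innerV_scale_right)

lemma innerV_Lap: "innerV w r x (Lap w r y) = (\<Sum>i\<in>UNIV. \<Sum>j\<in>UNIV. w i j * x $ i * (y $ i - y $ j))"
proof -
  have "innerV w r x (Lap w r y) = (\<Sum>i\<in>UNIV. x $ i * (\<Sum>j\<in>UNIV. w i j * (y $ i - y $ j)))"
    unfolding innerV_def Lap_def
  proof (rule sum.cong, simp)
    fix i
    have "deg w i powr r * deg w i powr (- r) = 1"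
      using deg_pos[of i] by (simp add: powr_add[symmetric])
    then show "deg w i powr r * x $ i * ((\<chi> i. deg w i powr - r * (\<Sum>j\<in>UNIV. w i j * (y $ i - y $ j))) $ i) =
         x $ i * (\<Sum>j\<in>UNIV. w i j * (y $ i - y $ j))"
      by (simp add: algebra_simps)
  qed
  also have "\<dots> = (\<Sum>i\<in>UNIV. \<Sum>j\<in>UNIV. w i j * x $ i * (y $ i - y $ j))"
    by (simp add: sum_distrib_left mult_ac)
  finally show ?thesis .
qed

lemma innerV_Lap_sym2: "2 * innerV w r x (Lap w r y) =
   (\<Sum>i\<in>UNIV. \<Sum>j\<in>UNIV. w i j * (x $ i - x $ j) * (y $ i - y $ j))"
proof -
  have "innerV w r x (Lap w r y) = (\<Sum>i\<in>UNIV. \<Sum>j\<in>UNIV. w j i * x $ j * (y $ j - y $ i))"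
    unfolding innerV_Lap by (rule sum.swap)
  also have "\<dots> = (\<Sum>i\<in>UNIV. \<Sum>j\<in>UNIV. - (w i j * x $ j * (y $ i - y $ j)))"
    apply (intro sum.cong refl) apply (subst wsym) apply (simp add: algebra_simps) done
  finally have a: "innerV w r x (Lap w r y) = - (\<Sum>i\<in>UNIV. \<Sum>j\<in>UNIV. w i j * x $ j * (y $ i - y $ j))"
    by (simp add: sum_negf)
  have "2 * innerV w r x (Lap w r y) = innerV w r x (Lap w r y) + innerV w r x (Lap w r y)" by simp
  also have "\<dots> = (\<Sum>i\<in>UNIV. \<Sum>j\<in>UNIV. w i j * x $ i * (y $ i - y $ j)) - (\<Sum>i\<in>UNIV. \<Sum>j\<in>UNIV. w i j * x $ j * (y $ i - y $ j))"
    using a innerV_Lap[of x y] by linarith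
  also have "\<dots> = (\<Sum>i\<in>UNIV. \<Sum>j\<in>UNIV. w i j * (x $ i - x $ j) * (y $ i - y $ j))"
    by (simp add: sum_subtractf[symmetric] algebra_simps)
  finally show ?thesis .
qed

lemma innerV_Lap_sym: "innerV w r x (Lap w r y) = innerV w r (Lap w r x) y"
proof -
  have "2 * innerV w r x (Lap w r y) = 2 * innerV w r y (Lap w r x)"
    unfolding innerV_Lap_sym2 by (simp add: mult_ac)
  then show ?thesis by (simp add: innerV_sym)
qed

lemma Lap_linear: "linear (Lap w r)"
proof (rule linearI)
  fix x y :: "real^'v"
  show "Lap w r (x + y) = Lap w r x + Lap w r y"
  proof -
    have "\<And>i. (\<Sum>j\<in>UNIV. w i j * ((x + y) $ i - (x + y) $ j)) =
       (\<Sum>j\<in>UNIV. w i j * (x $ i - x $ j)) + (\<Sum>j\<in>UNIV. w i j * (y $ i - y $ j))"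
      unfolding sum.distrib[symmetric] by (rule sum.cong) (simp_all add: algebra_simps)
    then show ?thesis unfolding Lap_def vec_eq_iff by (simp add: ring_distribs)
  qed
next
  fix a :: real and x :: "real^'v"
  show "Lap w r (a *\<^sub>R x) = a *\<^sub>R Lap w r x"
    unfolding Lap_def vec_eq_iff
    by (simp add: sum_distrib_left algebra_simps)
qed

lemma massV_inner: "massV w r u = innerV w r (chi UNIV) u"
  unfolding massV_def innerV_def chi_def by simp

lemma Lap_const: "Lap w r (chi UNIV) = 0"
  unfolding Lap_def chi_def by (simp add: vec_eq_iff)

lemma mass_Lap: "massV w r (Lap w r y) = 0"
  unfolding massV_inner innerV_Lap_sym Lap_const by simp

lemma sumc_pos: "0 < (\<Sum>i\<in>UNIV. deg w i powr r)"
  using c_pos unfolding c_def by (simp add: sum_pos)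

lemma Lap_ker:
  assumes "Lap w r p = 0" and "massV w r p = 0" shows "p = 0"
proof -
  have "(\<Sum>i\<in>UNIV. \<Sum>j\<in>UNIV. w i j * (p $ i - p $ j) * (p $ i - p $ j)) = 0"
    using innerV_Lap_sym2[of p p] assms(1) by simp
  moreover have nn: "\<And>i j. 0 \<le> w i j * (p $ i - p $ j) * (p $ i - p $ j)"
    by (simp add: wnn mult.assoc)
  ultimately have "\<forall>i\<in>UNIV. (\<Sum>j\<in>UNIV. w i j * (p $ i - p $ j) * (p $ i - p $ j)) = 0"
    by (subst sum_nonneg_eq_0_iff[symmetric]) (auto intro: sum_nonneg)
  then have z: "\<And>i j. w i j * (p $ i - p $ j) * (p $ i - p $ j) = 0"
    using nn by (simp add: sum_nonneg_eq_0_iff)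
  have step: "p $ a = p $ b" if "0 < w a b" for a b
    using z[of a b] that by simp
  have eq: "p $ a = p $ b" if "(a, b) \<in> {(a, b). 0 < w a b}\<^sup>*" for a b
    using that by (induction rule: rtrancl_induct) (auto dest: step)
  fix a0
  have eqa: "\<And>b. p $ b = p $ a0" using eq[OF conn[of a0]] by metis
  have pc: "p = (p $ a0) *\<^sub>R chi UNIV"
  proof (rule vec_eq_iff[THEN iffD2], rule allI)
    fix i show "p $ i = ((p $ a0) *\<^sub>R chi UNIV) $ i" using eqa[of i] by (simp add: chi_def)
  qed
  have "massV w r p = p $ a0 * (\<Sum>i\<in>UNIV. deg w i powr r)"
    by (subst pc) (simp add: massV_def chi_def sum_distrib_left mult_ac)
  with assms(2) sumc_pos have "p $ a0 = 0" by simp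
  with pc show ?thesis by simp
qed


lemma massV_add: "massV w r (x + y) = massV w r x + massV w r y"
  unfolding massV_inner by (rule innerV_add_right)
lemma massV_diff: "massV w r (x - y) = massV w r x - massV w r y"
  unfolding massV_inner by (rule innerV_diff_right)
lemma massV_scale: "massV w r (a *\<^sub>R x) = a * massV w r x"
  unfolding massV_inner by (rule innerV_scale_right)
lemma massV_zero[simp]: "massV w r 0 = 0"
  unfolding massV_inner by simp
lemma massV_const: "massV w r (chi UNIV) = (\<Sum>i\<in>UNIV. deg w i powr r)"
  unfolding massV_def chi_def by simp

lemma avgV_mass: "massV w r (avgV w r u) = massV w r u"
  unfolding avgV_def massV_scale massV_const using sumc_pos by simp

lemma mass_centered: "massV w r (u - avgV w r u) = 0"
  by (simp add: massV_diff avgV_mass)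

lemma Lap_diff: "Lap w r (x - y) = Lap w r x - Lap w r y"
  using Lap_linear by (simp add: linear_diff)
lemma Lap_zero[simp]: "Lap w r 0 = 0"
  using Lap_linear by (simp add: linear_0)

definition T :: "real^'v \<Rightarrow> real^'v" where
  "T p = Lap w r p + massV w r p *\<^sub>R chi UNIV"

lemma T_linear: "linear T"
  unfolding T_def
  by (rule linearI) (simp_all add: linear_add[OF Lap_linear] linear_scale[OF Lap_linear]
      massV_add massV_scale algebra_simps scaleR_add_left)

lemma T_zero: assumes "T z = 0" shows "z = 0"
proof -
  have "massV w r (T z) = massV w r z * (\<Sum>i\<in>UNIV. deg w i powr r)"
    unfolding T_def massV_add massV_scale mass_Lap massV_const by simp
  with assms sumc_pos have m: "massV w r z = 0" by simp
  with assms have "Lap w r z = 0" unfolding T_def by simp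
  with m show ?thesis using Lap_ker by blast
qed

lemma T_inj: "inj T"
proof (rule injI)
  fix x y assume "T x = T y"
  then have "T (x - y) = 0" using T_linear by (simp add: linear_diff)
  then show "x = y" using T_zero by fastforce
qed

lemma T_surj: "surj T"
  using linear_injective_imp_surjective[OF T_linear T_inj] by simp

lemma phi_ex1: "\<exists>!p. Lap w r p = u - avgV w r u \<and> massV w r p = 0"
proof (rule ex_ex1I)
  obtain p where p: "T p = u - avgV w r u" using T_surj by (metis surjD)
  have "massV w r (T p) = massV w r p * (\<Sum>i\<in>UNIV. deg w i powr r)"
    unfolding T_def massV_add massV_scale mass_Lap massV_const by simp
  with p mass_centered sumc_pos have m: "massV w r p = 0" by simp
  with p have "Lap w r p = u - avgV w r u" unfolding T_def by simp
  with m show "\<exists>p. Lap w r p = u - avgV w r u \<and> massV w r p = 0" by blast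
next
  fix p q assume "Lap w r p = u - avgV w r u \<and> massV w r p = 0"
    "Lap w r q = u - avgV w r u \<and> massV w r q = 0"
  then have "Lap w r (p - q) = 0" "massV w r (p - q) = 0"
    by (simp_all add: Lap_diff massV_diff)
  then have "p - q = 0" by (rule Lap_ker)
  then show "p = q" by simp
qed

lemma phi_spec: "Lap w r (phiV w r u) = u - avgV w r u" "massV w r (phiV w r u) = 0"
  using theI'[OF phi_ex1[of u]] unfolding phiV_def by auto

lemma phi_unique: assumes "Lap w r p = u - avgV w r u" "massV w r p = 0"
  shows "phiV w r u = p"
  using phi_ex1[of u] phi_spec[of u] assms by blast

lemma avgV_add: "avgV w r (x + y) = avgV w r x + avgV w r y"
  unfolding avgV_def massV_add by (simp add: add_divide_distrib scaleR_add_left)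
lemma avgV_scale: "avgV w r (a *\<^sub>R x) = a *\<^sub>R avgV w r x"
  unfolding avgV_def massV_scale by simp

lemma phi_linear: "linear (phiV w r)"
proof (rule linearI)
  fix x y
  show "phiV w r (x + y) = phiV w r x + phiV w r y"
    by (rule phi_unique) (simp_all add: linear_add[OF Lap_linear] phi_spec massV_add avgV_add)
next
  fix a x
  show "phiV w r (a *\<^sub>R x) = a *\<^sub>R phiV w r x"
    by (rule phi_unique) (simp_all add: linear_scale[OF Lap_linear] phi_spec massV_scale avgV_scale
        scaleR_diff_right)
qed

lemma inner_phi_avg: "innerV w r (phiV w r x) (avgV w r y) = 0"
  unfolding avgV_def innerV_scale_right
  by (simp add: innerV_sym[of _ "chi UNIV"] massV_inner[symmetric] phi_spec)

lemma phi_sym: "innerV w r (phiV w r x) y = innerV w r x (phiV w r y)"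
proof -
  have y: "y = Lap w r (phiV w r y) + avgV w r y" by (simp add: phi_spec)
  have "innerV w r (phiV w r x) y = innerV w r (phiV w r x) (Lap w r (phiV w r y))"
    by (subst y) (simp add: innerV_add_right inner_phi_avg)
  also have "\<dots> = innerV w r (x - avgV w r x) (phiV w r y)"
    by (subst innerV_Lap_sym) (simp add: phi_spec)
  also have "\<dots> = innerV w r x (phiV w r y)"
    by (simp add: innerV_diff_left innerV_sym[of "avgV w r x"] inner_phi_avg)
  finally show ?thesis .
qed

lemma phi_const: "phiV w r (chi UNIV) = 0"
proof (rule phi_unique)
  have "avgV w r (chi UNIV) = chi UNIV"
    unfolding avgV_def massV_const using sumc_pos by simp
  then show "Lap w r 0 = chi UNIV - avgV w r (chi UNIV)" by simp
qed simp

lemma Lop_linear: "linear (Lop w r g)"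
  unfolding Lop_def
  by (rule linearI) (simp_all add: linear_add[OF Lap_linear] linear_scale[OF Lap_linear]
      linear_add[OF phi_linear] linear_scale[OF phi_linear] algebra_simps)

lemma Lop_sym: "innerV w r (Lop w r g x) y = innerV w r x (Lop w r g y)"
  unfolding Lop_def
  by (simp add: innerV_add_left innerV_add_right innerV_scale_left innerV_scale_right
      innerV_Lap_sym phi_sym)

lemma Lop_const: "Lop w r g (chi UNIV) = 0"
  unfolding Lop_def by (simp add: Lap_const phi_const)


lemma Lop_zero[simp]: "Lop w r g 0 = 0"
  using Lop_linear by (simp add: linear_0)

lemma pow_linear: "linear (Lop w r g ^^ k)"
proof (induction k)
  case 0 show ?case by (simp, rule linearI, simp_all)
next
  case (Suc k) then show ?case using linear_compose[OF Suc.IH Lop_linear[of g]] by (simp add: o_def)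
qed

lemma pow_bound: "\<exists>K>0. \<forall>k x. norm ((Lop w r g ^^ k) x) \<le> K ^ k * norm x"
proof -
  have "bounded_linear (Lop w r g)" using Lop_linear linear_conv_bounded_linear by blast
  then obtain K where K: "K > 0" "\<And>x. norm (Lop w r g x) \<le> norm x * K"
    using bounded_linear.pos_bounded by blast
  have "norm ((Lop w r g ^^ k) x) \<le> K ^ k * norm x" for k x
  proof (induction k)
    case 0 show ?case by simp
  next
    case (Suc k)
    have "norm ((Lop w r g ^^ Suc k) x) \<le> norm ((Lop w r g ^^ k) x) * K" using K(2) by simp
    also have "\<dots> \<le> K ^ k * norm x * K" using Suc K(1) by (simp add: mult_right_mono)
    finally show ?case by (simp add: mult_ac)
  qed
  with K(1) show ?thesis by blast
qed

lemma pow_sym: "innerV w r ((Lop w r g ^^ k) x) y = innerV w r x ((Lop w r g ^^ k) y)"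
proof (induction k arbitrary: x y)
  case 0 show ?case by simp
next
  case (Suc k)
  have "innerV w r ((Lop w r g ^^ Suc k) x) y = innerV w r ((Lop w r g ^^ k) x) (Lop w r g y)"
    by (simp add: Lop_sym)
  also have "\<dots> = innerV w r x ((Lop w r g ^^ k) (Lop w r g y))" by (rule Suc.IH)
  also have "\<dots> = innerV w r x ((Lop w r g ^^ Suc k) y)" by (simp add: funpow_swap1)
  finally show ?case .
qed

lemma pow_const: "(Lop w r g ^^ k) (chi UNIV) = (if k = 0 then chi UNIV else 0)"
  by (induction k) (auto simp: Lop_const)

lemma pow_inner_shift: "innerV w r ((Lop w r g ^^ j) u) ((Lop w r g ^^ m) u) = innerV w r u ((Lop w r g ^^ (j + m)) u)"
  by (simp add: pow_sym funpow_add)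

definition aa :: "real \<Rightarrow> real \<Rightarrow> nat \<Rightarrow> real^'v \<Rightarrow> real^'v" where
  "aa g t k u = ((- t) ^ k / fact k) *\<^sub>R (Lop w r g ^^ k) u"

lemma expL_aa: "expL w r g t u = (\<Sum>k. aa g t k u)"
  by (simp add: expL_def aa_def)

lemma summable_norm_aa: "summable (\<lambda>k. norm (aa g t k u))"
proof -
  obtain K where K: "K > 0" "\<And>k x. norm ((Lop w r g ^^ k) x) \<le> K ^ k * norm x"
    using pow_bound by blast
  have "summable (\<lambda>k. inverse (fact k) * (\<bar>t\<bar> * K) ^ k)" by (rule summable_exp)
  then have s: "summable (\<lambda>k. inverse (fact k) * (\<bar>t\<bar> * K) ^ k * norm u)"
    by (rule summable_mult2)
  show ?thesis
  proof (rule summable_comparison_test'[OF s])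
    fix k :: nat
    have "norm (norm (aa g t k u)) = \<bar>t\<bar> ^ k / fact k * norm ((Lop w r g ^^ k) u)"
      by (simp add: aa_def power_abs)
    also have "\<dots> \<le> \<bar>t\<bar> ^ k / fact k * (K ^ k * norm u)"
      by (rule mult_left_mono[OF K(2)]) simp
    also have "\<dots> = inverse (fact k) * (\<bar>t\<bar> * K) ^ k * norm u"
      by (simp add: power_mult_distrib divide_inverse mult_ac)
    finally show "norm (norm (aa g t k u)) \<le> inverse (fact k) * (\<bar>t\<bar> * K) ^ k * norm u" .
  qed
qed

lemma summable_aa: "summable (\<lambda>k. aa g t k u)"
  by (rule summable_norm_cancel[OF summable_norm_aa])

lemma inner_suminf_prod:
  fixes X Y :: "nat \<Rightarrow> real^'v"
  assumes X: "summable (\<lambda>k. norm (X k))" and Y: "summable (\<lambda>k. norm (Y k))"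
  shows "innerV w r (suminf X) (suminf Y) = (\<Sum>n. \<Sum>j\<le>n. innerV w r (X j) (Y (n - j)))"
proof -
  have nx: "summable (\<lambda>k. norm (X k $ i))" for i
    by (rule summable_comparison_test'[OF X]) (simp add: component_le_norm_cart)
  have ny: "summable (\<lambda>k. norm (Y k $ i))" for i
    by (rule summable_comparison_test'[OF Y]) (simp add: component_le_norm_cart)
  have sx: "(suminf X) $ i = (\<Sum>k. X k $ i)" for i
    using bounded_linear.suminf[OF bounded_linear_vec_nth summable_norm_cancel[OF X]] by simp
  have sy: "(suminf Y) $ i = (\<Sum>k. Y k $ i)" for i
    using bounded_linear.suminf[OF bounded_linear_vec_nth summable_norm_cancel[OF Y]] by simp
  have cp: "(\<Sum>k. X k $ i) * (\<Sum>k. Y k $ i) = (\<Sum>n. \<Sum>j\<le>n. X j $ i * Y (n - j) $ i)" for i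
    by (rule Cauchy_product[OF nx ny])
  have sc: "summable (\<lambda>n. \<Sum>j\<le>n. X j $ i * Y (n - j) $ i)" for i
    by (rule summable_Cauchy_product[OF nx ny])
  have "innerV w r (suminf X) (suminf Y) = (\<Sum>i\<in>UNIV. c i * ((\<Sum>k. X k $ i) * (\<Sum>k. Y k $ i)))"
    unfolding innerV_c sx sy by (simp add: mult.assoc)
  also have "\<dots> = (\<Sum>i\<in>UNIV. (\<Sum>n. c i * (\<Sum>j\<le>n. X j $ i * Y (n - j) $ i)))"
    unfolding cp by (simp add: suminf_mult[OF sc])
  also have "\<dots> = (\<Sum>n. \<Sum>i\<in>UNIV. c i * (\<Sum>j\<le>n. X j $ i * Y (n - j) $ i))"
    by (rule suminf_sum[symmetric]) (rule summable_mult[OF sc])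
  also have "\<dots> = (\<Sum>n. \<Sum>j\<le>n. innerV w r (X j) (Y (n - j)))"
  proof (rule suminf_cong)
    fix n
    show "(\<Sum>i\<in>UNIV. c i * (\<Sum>j\<le>n. X j $ i * Y (n - j) $ i)) = (\<Sum>j\<le>n. innerV w r (X j) (Y (n - j)))"
      unfolding innerV_c by (subst sum.swap) (simp add: sum_distrib_left mult.assoc)
  qed
  finally show ?thesis .
qed

lemma exp_coeff: fixes s t :: real shows "(\<Sum>j\<le>n. ((- s) ^ j / fact j) * ((- t) ^ (n - j) / fact (n - j))) = (- (s + t)) ^ n / fact n"
  using exp_series_add_commuting[of "- s :: real" "- t" n] by (simp add: divide_inverse mult_ac)

lemma prodE: "innerV w r (expL w r g s u) (expL w r g t u) = innerV w r u (expL w r g (s + t) u)"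
proof -
  have "innerV w r (expL w r g s u) (expL w r g t u) =
      (\<Sum>n. \<Sum>j\<le>n. innerV w r (aa g s j u) (aa g t (n - j) u))"
    unfolding expL_aa by (rule inner_suminf_prod[OF summable_norm_aa summable_norm_aa])
  also have "\<dots> = (\<Sum>n. ((- (s + t)) ^ n / fact n) * innerV w r u ((Lop w r g ^^ n) u))"
  proof (rule suminf_cong)
    fix n
    have "(\<Sum>j\<le>n. innerV w r (aa g s j u) (aa g t (n - j) u)) =
        (\<Sum>j\<le>n. ((- s) ^ j / fact j) * ((- t) ^ (n - j) / fact (n - j)) * innerV w r u ((Lop w r g ^^ n) u))"
    proof (rule sum.cong[OF refl])
      fix j assume "j \<in> {..n}"
      then have "j + (n - j) = n" by simp
      then show "innerV w r (aa g s j u) (aa g t (n - j) u) =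
        ((- s) ^ j / fact j) * ((- t) ^ (n - j) / fact (n - j)) * innerV w r u ((Lop w r g ^^ n) u)"
        unfolding aa_def innerV_scale_left innerV_scale_right pow_inner_shift by (simp add: mult_ac)
    qed
    also have "\<dots> = ((- (s + t)) ^ n / fact n) * innerV w r u ((Lop w r g ^^ n) u)"
      unfolding sum_distrib_right[symmetric] exp_coeff ..
    finally show "(\<Sum>j\<le>n. innerV w r (aa g s j u) (aa g t (n - j) u)) =
        ((- (s + t)) ^ n / fact n) * innerV w r u ((Lop w r g ^^ n) u)" .
  qed
  also have "\<dots> = innerV w r u (expL w r g (s + t) u)"
    unfolding expL_aa bounded_linear.suminf[OF bl_innerV_right summable_aa]
    by (simp add: aa_def innerV_scale_right)
  finally show ?thesis .
qed

lemma E_zero_time: "expL w r g 0 u = u"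
proof -
  have "(\<lambda>k. aa g 0 k u) = (\<lambda>k. if k = 0 then u else 0)"
    by (auto simp: aa_def fun_eq_iff)
  then show ?thesis unfolding expL_aa
    by (simp add: sums_unique[OF sums_single[where i=0 and f="\<lambda>_. u"], symmetric])
qed

lemma E_const: "expL w r g t (chi UNIV) = chi UNIV"
proof -
  have "(\<lambda>k. aa g t k (chi UNIV)) = (\<lambda>k. if k = 0 then chi UNIV else 0)"
    by (auto simp: aa_def fun_eq_iff pow_const)
  then show ?thesis unfolding expL_aa
    by (simp add: sums_unique[OF sums_single[where i=0 and f="\<lambda>_. chi UNIV"], symmetric])
qed

lemma E_sym: "innerV w r (expL w r g t x) y = innerV w r x (expL w r g t y)"
  unfolding expL_aa bounded_linear.suminf[OF bl_innerV_right summable_aa]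
    bounded_linear.suminf[OF bl_innerV_left summable_aa]
  by (simp add: aa_def innerV_scale_left innerV_scale_right pow_sym)

lemma E_linear: "linear (expL w r g t)"
proof (rule linearI)
  fix x y
  show "expL w r g t (x + y) = expL w r g t x + expL w r g t y"
    unfolding expL_aa suminf_add[OF summable_aa summable_aa]
    by (simp add: aa_def linear_add[OF pow_linear] scaleR_add_right)
next
  fix a x
  show "expL w r g t (a *\<^sub>R x) = a *\<^sub>R expL w r g t x"
  proof -
    have "a *\<^sub>R (\<Sum>k. aa g t k x) = (\<Sum>k. a *\<^sub>R aa g t k x)"
      by (rule suminf_scaleR_right[OF summable_aa])
    then show ?thesis unfolding expL_aa by (simp add: aa_def linear_scale[OF pow_linear] mult_ac)
  qed
qed

lemma E_pos: assumes "u \<noteq> 0" shows "0 < innerV w r u (expL w r g t u)"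
proof -
  have e: "innerV w r u (expL w r g t u) = innerV w r (expL w r g (t/2) u) (expL w r g (t/2) u)"
    using prodE[where s="t/2" and u=u and t="t/2"] by simp
  have "expL w r g (t/2) u \<noteq> 0"
  proof
    assume z: "expL w r g (t/2) u = 0"
    have "innerV w r u u = innerV w r (expL w r g (t/2) u) (expL w r g (- (t/2)) u)"
      using prodE[where s="t/2" and u=u and t="- (t/2)"] by (simp add: E_zero_time)
    also have "\<dots> = 0" using z by simp
    finally show False using innerV_self_pos[OF assms] by simp
  qed
  then show ?thesis unfolding e by (rule innerV_self_pos)
qed


lemma innerV_bilinear: "bounded_bilinear (innerV w r)"
proof
  fix a a' b b' :: "real^'v" and x :: real
  show "innerV w r (a + a') b = innerV w r a b + innerV w r a' b" by (rule innerV_add_left)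
  show "innerV w r a (b + b') = innerV w r a b + innerV w r a b'" by (rule innerV_add_right)
  show "innerV w r (x *\<^sub>R a) b = x *\<^sub>R innerV w r a b" by (simp add: innerV_scale_left)
  show "innerV w r a (x *\<^sub>R b) = x *\<^sub>R innerV w r a b" by (simp add: innerV_scale_right)
next
  show "\<exists>K. \<forall>a b. norm (innerV w r a b) \<le> norm a * norm b * K"
  proof (intro exI allI)
    fix a b :: "real^'v"
    have "norm (innerV w r a b) \<le> (\<Sum>i\<in>UNIV. \<bar>c i * a $ i * b $ i\<bar>)"
      unfolding innerV_c real_norm_def by (rule sum_abs)
    also have "\<dots> \<le> (\<Sum>i\<in>UNIV. c i * (norm a * norm b))"
    proof (rule sum_mono)
      fix i
      have "\<bar>c i * a $ i * b $ i\<bar> = c i * (\<bar>a $ i\<bar> * \<bar>b $ i\<bar>)"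
        using c_pos[of i] by (simp add: abs_mult)
      also have "\<dots> \<le> c i * (norm a * norm b)"
        using c_pos[of i] by (intro mult_left_mono mult_mono component_le_norm_cart) auto
      finally show "\<bar>c i * a $ i * b $ i\<bar> \<le> c i * (norm a * norm b)" .
    qed
    also have "\<dots> = norm a * norm b * (\<Sum>i\<in>UNIV. c i)"
      by (subst sum_distrib_left) (simp add: mult_ac)
    finally show "norm (innerV w r a b) \<le> norm a * norm b * (\<Sum>i\<in>UNIV. c i)" .
  qed
qed

lemma J_alt: "Jtau w r g t u = innerV w r (chi UNIV) u - innerV w r u (expL w r g t u)"
proof -
  have "innerV w r (chi UNIV) (expL w r g t u) = innerV w r (chi UNIV) u"
    by (simp add: E_sym[symmetric] E_const)
  then show ?thesis unfolding Jtau_def innerV_diff_left by simp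
qed

lemma dJ_alt: "dJtau w r g t u h = innerV w r (chi UNIV) h - 2 * innerV w r u (expL w r g t h)"
  unfolding dJtau_def innerV_diff_left innerV_scale_left E_sym ..

lemma E_diff: "expL w r g t (x - y) = expL w r g t x - expL w r g t y"
  using E_linear by (simp add: linear_diff)

lemma Q_identity:
  "Jtau w r g t v = Jtau w r g t u + dJtau w r g t u (v - u)
     - innerV w r (v - u) (expL w r g t (v - u))"
proof -
  have B: "innerV w r v (expL w r g t u) = innerV w r u (expL w r g t v)"
    by (simp add: innerV_sym[of v] E_sym)
  show ?thesis
    unfolding J_alt dJ_alt E_diff innerV_diff_left innerV_diff_right
    using B by (simp add: algebra_simps)
qed

lemma dJ_add: "dJtau w r g t u (a + b) = dJtau w r g t u a + dJtau w r g t u b"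
  unfolding dJtau_def by (rule innerV_add_right)
lemma dJ_scale: "dJtau w r g t u (x *\<^sub>R a) = x * dJtau w r g t u a"
  unfolding dJtau_def by (rule innerV_scale_right)
lemma dJ_diff: "dJtau w r g t u (a - b) = dJtau w r g t u a - dJtau w r g t u b"
  unfolding dJtau_def by (rule innerV_diff_right)

lemma strictly_concave: "strictly_concave_on UNIV (Jtau w r g t)"
  unfolding strictly_concave_on_def
proof (intro conjI ballI impI allI)
  show "convex (UNIV :: (real^'v) set)" by simp
next
  fix x y :: "real^'v" and s :: real
  assume xy: "x \<noteq> y" and s: "0 < s \<and> s < 1"
  define m where "m = (1 - s) *\<^sub>R x + s *\<^sub>R y"
  have xm: "x - m = s *\<^sub>R (x - y)" unfolding m_def by (simp add: algebra_simps)
  have ym: "y - m = (s - 1) *\<^sub>R (x - y)" unfolding m_def by (simp add: algebra_simps)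
  have nz: "x - y \<noteq> 0" using xy by simp
  have qx: "innerV w r (x - m) (expL w r g t (x - m)) = s * s * innerV w r (x - y) (expL w r g t (x - y))"
    unfolding xm linear_scale[OF E_linear] innerV_scale_left innerV_scale_right by simp
  have qy: "innerV w r (y - m) (expL w r g t (y - m)) = (s - 1) * (s - 1) * innerV w r (x - y) (expL w r g t (x - y))"
    unfolding ym linear_scale[OF E_linear] innerV_scale_left innerV_scale_right by simp
  have dd: "(1 - s) * dJtau w r g t m (x - m) + s * dJtau w r g t m (y - m) = 0"
    unfolding xm ym dJ_scale by (simp add: algebra_simps)
  have q: "0 < innerV w r (x - y) (expL w r g t (x - y))" by (rule E_pos[OF nz])
  define q where "q = innerV w r (x - y) (expL w r g t (x - y))"
  have ex: "Jtau w r g t x = Jtau w r g t m + dJtau w r g t m (x - m) - s * s * q"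
    using Q_identity[where g=g and t=t and v=x and u=m] qx unfolding q_def by simp
  have ey: "Jtau w r g t y = Jtau w r g t m + dJtau w r g t m (y - m) - (s - 1) * (s - 1) * q"
    using Q_identity[where g=g and t=t and v=y and u=m] qy unfolding q_def by simp
  have "(1 - s) * Jtau w r g t x + s * Jtau w r g t y =
      Jtau w r g t m + ((1 - s) * dJtau w r g t m (x - m) + s * dJtau w r g t m (y - m))
      - ((1 - s) * (s * s) + s * ((s - 1) * (s - 1))) * q"
    unfolding ex ey by (simp add: algebra_simps)
  also have "\<dots> = Jtau w r g t m - ((1 - s) * (s * s) + s * ((s - 1) * (s - 1))) * innerV w r (x - y) (expL w r g t (x - y))"
    unfolding dd q_def by simp
  also have "\<dots> < Jtau w r g t m"
  proof -
    have e: "(1 - s) * (s * s) + s * ((s - 1) * (s - 1)) = s * (1 - s)" by (simp add: algebra_simps)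
    have "0 < (1 - s) * (s * s) + s * ((s - 1) * (s - 1))" unfolding e using s by simp
    then show ?thesis using q by simp
  qed
  finally show "(1 - s) * Jtau w r g t x + s * Jtau w r g t y < Jtau w r g t ((1 - s) *\<^sub>R x + s *\<^sub>R y)"
    unfolding m_def .
qed

lemma J_deriv: "(Jtau w r g t has_derivative dJtau w r g t u) (at u)"
proof -
  have bl: "bounded_linear (expL w r g t)" using E_linear linear_conv_bounded_linear by blast
  have f: "((\<lambda>x. chi UNIV - x) has_derivative (\<lambda>h. - h)) (at u)"
    by (auto intro!: derivative_eq_intros)
  have g: "(expL w r g t has_derivative expL w r g t) (at u)"
    by (rule bounded_linear_imp_has_derivative[OF bl])
  have "((\<lambda>x. innerV w r (chi UNIV - x) (expL w r g t x)) has_derivative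
      (\<lambda>h. innerV w r (chi UNIV - u) (expL w r g t h) + innerV w r (- h) (expL w r g t u))) (at u)"
    by (rule bounded_bilinear.FDERIV[OF innerV_bilinear f g])
  moreover have "(\<lambda>h. innerV w r (chi UNIV - u) (expL w r g t h) + innerV w r (- h) (expL w r g t u))
      = dJtau w r g t u"
  proof
    fix h
    have m: "innerV w r (- h) z = - innerV w r h z" for z
      using innerV_scale_left[of "-1" h z] by simp
    have "innerV w r (chi UNIV - u) (expL w r g t h) = innerV w r (chi UNIV) h - innerV w r u (expL w r g t h)"
      by (simp only: E_sym[symmetric] E_diff E_const innerV_diff_left)
    moreover have "innerV w r h (expL w r g t u) = innerV w r u (expL w r g t h)"
      by (simp add: innerV_sym[of h] E_sym)
    ultimately show "innerV w r (chi UNIV - u) (expL w r g t h) + innerV w r (- h) (expL w r g t u) = dJtau w r g t u h"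
      unfolding dJ_alt m by simp
  qed
  ultimately show ?thesis unfolding Jtau_def by simp
qed

lemma chi_K: "chi A \<in> Kset"
  unfolding Kset_def chi_def by simp

lemma chi_inj: "chi A = chi B \<Longrightarrow> A = B"
  unfolding chi_def vec_eq_iff by (metis (mono_tags, lifting) vec_lambda_beta zero_neq_one set_eqI)

lemma step_min:
  assumes "v \<in> Kset"
  shows "dJtau w r g t (chi A) (chi (okmbo_step w r g t A)) \<le> dJtau w r g t (chi A) v"
  unfolding dJtau_def innerV_c
proof (rule sum_mono)
  fix i
  let ?e = "(chi UNIV - 2 *\<^sub>R expL w r g t (chi A)) $ i"
  have v: "0 \<le> v $ i" "v $ i \<le> 1" using assms unfolding Kset_def by auto
  show "c i * ?e * chi (okmbo_step w r g t A) $ i \<le> c i * ?e * v $ i"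
  proof (cases "expL w r g t (chi A) $ i \<ge> 1/2")
    case True
    then have "?e \<le> 0" by (simp add: chi_def)
    then have "c i * ?e \<le> 0" using c_pos[of i] by (simp add: mult_nonneg_nonpos)
    then have "c i * ?e * 1 \<le> c i * ?e * v $ i" using v by (intro mult_left_mono_neg) auto
    then show ?thesis using True by (simp add: chi_def okmbo_step_def)
  next
    case False
    then have "?e > 0" by (simp add: chi_def)
    then have "c i * ?e * 0 \<le> c i * ?e * v $ i" using v c_pos[of i] by simp
    then show ?thesis using False by (simp add: chi_def okmbo_step_def)
  qed
qed

lemma step_decrease:
  assumes "B = okmbo_step w r g t A"
  shows "Jtau w r g t (chi B) \<le> Jtau w r g t (chi A)
     \<and> (Jtau w r g t (chi B) = Jtau w r g t (chi A) \<longleftrightarrow> B = A)"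
proof -
  let ?u = "chi A" and ?v = "chi B"
  have d: "dJtau w r g t ?u (?v - ?u) \<le> 0"
    using step_min[where A=A and v="chi A", OF chi_K] assms by (simp add: dJ_diff)
  have q: "0 \<le> innerV w r (?v - ?u) (expL w r g t (?v - ?u))"
    using E_pos[of "?v - ?u" g t] by (cases "?v - ?u = 0") auto
  have Q: "Jtau w r g t ?v = Jtau w r g t ?u + dJtau w r g t ?u (?v - ?u)
     - innerV w r (?v - ?u) (expL w r g t (?v - ?u))" by (rule Q_identity)
  have le: "Jtau w r g t ?v \<le> Jtau w r g t ?u" using Q d q by linarith
  have "B = A" if eq: "Jtau w r g t ?v = Jtau w r g t ?u"
  proof (rule ccontr)
    assume "B \<noteq> A"
    then have "?v - ?u \<noteq> 0" using chi_inj by fastforce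
    then have "0 < innerV w r (?v - ?u) (expL w r g t (?v - ?u))" by (rule E_pos)
    with Q d eq show False by linarith
  qed
  with le show ?thesis by auto
qed

end

theorem lemma5p5:
  fixes w :: "'v::finite \<Rightarrow> 'v \<Rightarrow> real" and r \<gamma> \<tau> :: real
    and S :: "nat \<Rightarrow> 'v set"
  assumes "CARD('v) \<ge> 2" and "wgraph w"
    and "0 \<le> r" and "r \<le> 1" and "0 \<le> \<gamma>" and "0 < \<tau>"
  shows "strictly_concave_on UNIV (Jtau w r \<gamma> \<tau>)
    \<and> (\<forall>u. (Jtau w r \<gamma> \<tau> has_derivative dJtau w r \<gamma> \<tau> u) (at u))
    \<and> ((\<forall>k. S (Suc k) = okmbo_step w r \<gamma> \<tau> (S k)) \<longrightarrow>
        (\<forall>k. chi (S (Suc k)) \<in> Kset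
           \<and> (\<forall>v\<in>Kset. dJtau w r \<gamma> \<tau> (chi (S k)) (chi (S (Suc k)))
                          \<le> dJtau w r \<gamma> \<tau> (chi (S k)) v)
           \<and> Jtau w r \<gamma> \<tau> (chi (S (Suc k))) \<le> Jtau w r \<gamma> \<tau> (chi (S k))
           \<and> (Jtau w r \<gamma> \<tau> (chi (S (Suc k))) = Jtau w r \<gamma> \<tau> (chi (S k))
                \<longleftrightarrow> S (Suc k) = S k)))"
proof -
  interpret G w r using assms(1,2) by unfold_locales auto
  show ?thesis
  proof (intro conjI allI impI ballI)
    show "strictly_concave_on UNIV (Jtau w r \<gamma> \<tau>)" by (rule strictly_concave)
  next
    fix u show "(Jtau w r \<gamma> \<tau> has_derivative dJtau w r \<gamma> \<tau> u) (at u)" by (rule J_deriv)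
  next
    fix k show "chi (S (Suc k)) \<in> Kset" by (rule chi_K)
  next
    fix k and v :: "real^'v" assume h: "\<forall>k. S (Suc k) = okmbo_step w r \<gamma> \<tau> (S k)" and v: "v \<in> Kset"
    show "dJtau w r \<gamma> \<tau> (chi (S k)) (chi (S (Suc k))) \<le> dJtau w r \<gamma> \<tau> (chi (S k)) v"
      using step_min[of v \<gamma> \<tau> "S k", OF v] h by simp
  next
    fix k assume h: "\<forall>k. S (Suc k) = okmbo_step w r \<gamma> \<tau> (S k)"
    show "Jtau w r \<gamma> \<tau> (chi (S (Suc k))) \<le> Jtau w r \<gamma> \<tau> (chi (S k))"
      using step_decrease[of "S (Suc k)" \<gamma> \<tau> "S k"] h by simp
  next
    fix k assume h: "\<forall>k. S (Suc k) = okmbo_step w r \<gamma> \<tau> (S k)"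
    show "Jtau w r \<gamma> \<tau> (chi (S (Suc k))) = Jtau w r \<gamma> \<tau> (chi (S k)) \<longleftrightarrow> S (Suc k) = S k"
      using step_decrease[of "S (Suc k)" \<gamma> \<tau> "S k"] h by simp
  qed
qed

end
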